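(* Let $X$ be a $T_1$ space and $Q\subset C(X)$. The following are equivalent: (1) $Q$ is compact in $(C(X),\tau_\Gamma)$; (2) $Q$ is countably compact in $(C(X),\tau_\Gamma)$; (3) $Q$ is pseudocompact in $(C(X),\tau_\Gamma)$ (i.e. every continuous real-valued function on $Q$ with the subspace topology from $\tau_\Gamma$ is bounded).
   Context: $C(X)$ is the set of continuous real-valued functions on $X$, each identified with its graph in $X\times\mathbb{R}$. The graph topology $\tau_\Gamma$ on $C(X)$ has base $\{F_G: G\text{ open in }X\times\mathbb{R}\}$ where $F_G=\{f\in C(X): f\subset G\}$. *)

theory Defs
  imports "HOL-Analysis.Analysis"
begin

definition graph_of :: "'a topology \<Rightarrow> ('a \<Rightarrow> real) \<Rightarrow> ('a \<times> real) set" where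
  "graph_of X f = {(x, f x) | x. x \<in> topspace X}"

text \<open>C(X): continuous real-valued functions on X, each identified with its graph.\<close>
definition CX :: "'a topology \<Rightarrow> ('a \<times> real) set set" where
  "CX X = {graph_of X f | f. continuous_map X euclideanreal f}"

definition FG :: "'a topology \<Rightarrow> ('a \<times> real) set \<Rightarrow> ('a \<times> real) set set" where
  "FG X G = {f \<in> CX X. f \<subseteq> G}"

definition graph_topology :: "'a topology \<Rightarrow> ('a \<times> real) set topology" where
  "graph_topology X =
     subtopology
       (topology_generated_by {FG X G | G. openin (prod_topology X euclideanreal) G})
       (CX X)"

definition countably_compactin :: "'b topology \<Rightarrow> 'b set \<Rightarrow> bool" where
  "countably_compactin T S \<longleftrightarrow>
     S \<subseteq> topspace T \<and>
     (\<forall>\<U>. countable \<U> \<and> (\<forall>U \<in> \<U>. openin T U) \<and> S \<subseteq> \<Union>\<U>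
          \<longrightarrow> (\<exists>\<F>. finite \<F> \<and> \<F> \<subseteq> \<U> \<and> S \<subseteq> \<Union>\<F>))"

definition pseudocompactin :: "'b topology \<Rightarrow> 'b set \<Rightarrow> bool" where
  "pseudocompactin T S \<longleftrightarrow>
     S \<subseteq> topspace T \<and>
     (\<forall>f. continuous_map (subtopology T S) euclideanreal f \<longrightarrow> bounded (f ` S))"

end

theory Submission
  imports Defs
begin


definition fn :: "('a \<times> real) set \<Rightarrow> 'a \<Rightarrow> real" where
  "fn S x = (THE y. (x,y) \<in> S)"

lemma fn_graph: "x \<in> topspace X \<Longrightarrow> fn (graph_of X f) x = f x"
  unfolding fn_def graph_of_def by auto

lemma CX_E:
  assumes "S \<in> CX X"
  obtains f where "continuous_map X euclideanreal f" "S = graph_of X f"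
  using assms unfolding CX_def by auto

lemma CX_fn_cont: "S \<in> CX X \<Longrightarrow> continuous_map X euclideanreal (fn S)"
  by (metis CX_E continuous_map_eq fn_graph)

lemma CX_mem: assumes "S \<in> CX X" shows "(p \<in> S) \<longleftrightarrow> fst p \<in> topspace X \<and> snd p = fn S (fst p)"
proof -
  obtain f where f: "S = graph_of X f" using CX_E[OF assms] by blast
  have fS: "\<And>x. x \<in> topspace X \<Longrightarrow> fn S x = f x" using f fn_graph by metis
  have "p \<in> graph_of X f \<longleftrightarrow> fst p \<in> topspace X \<and> snd p = f (fst p)" by (cases p) (auto simp: graph_of_def)
  then show ?thesis using fS f by metis
qed

lemma CX_subset: "S \<in> CX X \<Longrightarrow> (S \<subseteq> G) \<longleftrightarrow> (\<forall>x\<in>topspace X. (x, fn S x) \<in> G)"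
  by (auto simp: CX_mem)

lemma CX_ext: assumes "S \<in> CX X" "T \<in> CX X" "\<forall>x\<in>topspace X. fn S x = fn T x" shows "S = T"
proof (rule set_eqI)
  fix p show "p \<in> S \<longleftrightarrow> p \<in> T" using assms by (auto simp: CX_mem)
qed

definition dG :: "'a topology \<Rightarrow> ('a \<times> real) set \<Rightarrow> ('a \<times> real) set \<Rightarrow> real" where
  "dG X S T = Sup (insert 0 ((\<lambda>x. min 1 \<bar>fn S x - fn T x\<bar>) ` topspace X))"

lemma dG_bdd: "bdd_above (insert 0 ((\<lambda>x. min 1 \<bar>fn S x - fn T x\<bar>) ` topspace X))"
  by (rule bdd_aboveI[where M=1]) auto

lemma dG_nonneg: "0 \<le> dG X S T"
  unfolding dG_def by (rule cSup_upper[OF _ dG_bdd]) auto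

lemma dG_le1: "dG X S T \<le> 1"
  unfolding dG_def by (rule cSup_least) auto

lemma dG_upper: "x \<in> topspace X \<Longrightarrow> min 1 \<bar>fn S x - fn T x\<bar> \<le> dG X S T"
  unfolding dG_def by (rule cSup_upper[OF _ dG_bdd]) auto

lemma dG_least: "0 \<le> c \<Longrightarrow> (\<And>x. x \<in> topspace X \<Longrightarrow> min 1 \<bar>fn S x - fn T x\<bar> \<le> c) \<Longrightarrow> dG X S T \<le> c"
  unfolding dG_def by (rule cSup_least) auto

lemma dG_commute: "dG X S T = dG X T S"
  unfolding dG_def by (simp add: abs_minus_commute)

lemma dG_lt: "dG X S T < c \<Longrightarrow> c \<le> 1 \<Longrightarrow> x \<in> topspace X \<Longrightarrow> \<bar>fn S x - fn T x\<bar> < c"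
  using dG_upper[of x X S T] by linarith

lemma dG_triangle: "dG X S U \<le> dG X S T + dG X T U"
  apply (rule dG_least)
  using dG_nonneg apply (smt (verit))
  subgoal for x using dG_upper[of x X S T] dG_upper[of x X T U] by linarith
  done

lemma dG_zero: "S \<in> CX X \<Longrightarrow> T \<in> CX X \<Longrightarrow> dG X S T = 0 \<longleftrightarrow> S = T"
proof
  assume "S \<in> CX X" "T \<in> CX X" "dG X S T = 0"
  then show "S = T"
    using dG_upper[of _ X S T] by (intro CX_ext[of S X T]) (auto, smt (verit))
next
  assume "S = T" then show "dG X S T = 0"
    using dG_nonneg by (smt (verit) dG_least abs_zero min.commute)
qed

lemma dG_metric: "Metric_space (CX X) (dG X)"
  by unfold_locales (auto simp: dG_nonneg dG_commute dG_zero dG_triangle)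



lemma CX_in_topspace: "S \<in> CX X \<Longrightarrow> S \<subseteq> topspace X \<times> UNIV"
  by (auto simp: CX_mem)

lemma FG_sub: "FG X G \<subseteq> CX X" by (auto simp: FG_def)

lemma FG_Int: "FG X G \<inter> FG X H = FG X (G \<inter> H)" by (auto simp: FG_def)

lemma topspace_GT: "topspace (graph_topology X) = CX X"
proof -
  have "FG X (topspace X \<times> UNIV) = CX X" using CX_in_topspace by (auto simp: FG_def)
  moreover have "openin (prod_topology X euclideanreal) (topspace X \<times> UNIV)"
    by (metis openin_topspace topspace_euclidean topspace_prod_topology)
  ultimately have "CX X \<subseteq> \<Union>{FG X G | G. openin (prod_topology X euclideanreal) G}" by blast
  moreover have "\<Union>{FG X G | G. openin (prod_topology X euclideanreal) G} \<subseteq> CX X" using FG_sub by blast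
  ultimately show ?thesis unfolding graph_topology_def by auto
qed

lemma FG_open: "openin (prod_topology X euclideanreal) G \<Longrightarrow> openin (graph_topology X) (FG X G)"
  unfolding graph_topology_def openin_subtopology
  by (rule exI[of _ "FG X G"]) (auto intro!: topology_generated_by_Basis simp: FG_def)

lemma GT_basic:
  assumes "openin (graph_topology X) U" "q \<in> U"
  shows "\<exists>G. openin (prod_topology X euclideanreal) G \<and> q \<in> FG X G \<and> FG X G \<subseteq> U"
proof -
  obtain V where V: "openin (topology_generated_by {FG X G | G. openin (prod_topology X euclideanreal) G}) V"
    "U = V \<inter> CX X"
    using assms(1) unfolding graph_topology_def openin_subtopology by blast
  have gen: "generate_topology_on {FG X G | G. openin (prod_topology X euclideanreal) G} V"
    using V(1) openin_topology_generated_by by blast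
  have "\<forall>q\<in>W. \<exists>G. openin (prod_topology X euclideanreal) G \<and> q \<in> FG X G \<and> FG X G \<subseteq> W"
    if "generate_topology_on {FG X G | G. openin (prod_topology X euclideanreal) G} W" for W
    using that
  proof (induction rule: generate_topology_on.induct)
    case Empty then show ?case by simp
  next
    case (Int a b)
    show ?case
    proof
      fix q assume "q \<in> a \<inter> b"
      then have qa: "q \<in> a" and qb: "q \<in> b" by auto
      obtain G1 where "openin (prod_topology X euclideanreal) G1" "q \<in> FG X G1" "FG X G1 \<subseteq> a"
        using Int.IH(1) qa by blast
      moreover obtain G2 where "openin (prod_topology X euclideanreal) G2" "q \<in> FG X G2" "FG X G2 \<subseteq> b"
        using Int.IH(2) qb by blast
      moreover have "FG X (G1 \<inter> G2) = FG X G1 \<inter> FG X G2" by (rule FG_Int[symmetric])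
      ultimately have "openin (prod_topology X euclideanreal) (G1 \<inter> G2) \<and> q \<in> FG X (G1 \<inter> G2) \<and> FG X (G1 \<inter> G2) \<subseteq> a \<inter> b"
        by (simp add: openin_Int) blast
      then show "\<exists>G. openin (prod_topology X euclideanreal) G \<and> q \<in> FG X G \<and> FG X G \<subseteq> a \<inter> b"
        by blast
    qed
  next
    case (UN K)
    show ?case
    proof
      fix q assume "q \<in> \<Union>K"
      then obtain k where k: "k \<in> K" "q \<in> k" by blast
      then obtain G where "openin (prod_topology X euclideanreal) G" "q \<in> FG X G" "FG X G \<subseteq> k"
        using UN.IH[OF k(1)] by blast
      then show "\<exists>G. openin (prod_topology X euclideanreal) G \<and> q \<in> FG X G \<and> FG X G \<subseteq> \<Union>K"
        using k(1) by blast
    qed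
  next
    case (Basis s)
    then obtain G where sG: "s = FG X G" and oG: "openin (prod_topology X euclideanreal) G" by blast
    show ?case
    proof
      fix q assume "q \<in> s"
      then show "\<exists>G. openin (prod_topology X euclideanreal) G \<and> q \<in> FG X G \<and> FG X G \<subseteq> s"
        using sG oG by blast
    qed
  qed
  note H = this
  have qV: "q \<in> V" using assms(2) V(2) by blast
  obtain G where "openin (prod_topology X euclideanreal) G" "q \<in> FG X G" "FG X G \<subseteq> V"
    using H[OF gen] qV by blast
  then show ?thesis using V(2) FG_sub by blast
qed

lemma cont_dist_fn:
  assumes "h \<in> CX X"
  shows "continuous_map (prod_topology X euclideanreal) euclideanreal (\<lambda>p. \<bar>snd p - fn h (fst p)\<bar>)"
proof -
  have "continuous_map (prod_topology X euclideanreal) euclideanreal (fn h \<circ> fst)"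
    using CX_fn_cont[OF assms] continuous_map_compose continuous_map_fst by blast
  then show ?thesis
    by (intro continuous_intros) (auto simp: o_def)
qed

lemma mball_open:
  assumes "h \<in> CX X"
  shows "openin (graph_topology X) (Metric_space.mball (CX X) (dG X) h e)"
proof (subst openin_subopen, intro ballI)
  fix k assume k: "k \<in> Metric_space.mball (CX X) (dG X) h e"
  have kC: "k \<in> CX X" and hk: "dG X h k < e"
    using k by (auto simp: Metric_space.mball_def[OF dG_metric])
  show "\<exists>T. openin (graph_topology X) T \<and> k \<in> T \<and> T \<subseteq> Metric_space.mball (CX X) (dG X) h e"
  proof (cases "e > 1")
    case True
    have "CX X \<subseteq> Metric_space.mball (CX X) (dG X) h e"
    proof
      fix y assume "y \<in> CX X"
      moreover have "dG X h y < e" using dG_le1[of X h y] True by linarith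
      ultimately show "y \<in> Metric_space.mball (CX X) (dG X) h e"
        using assms by (simp add: Metric_space.mball_def[OF dG_metric])
    qed
    moreover have "openin (graph_topology X) (CX X)" by (metis openin_topspace topspace_GT)
    ultimately show ?thesis using kC by blast
  next
    case False
    define c where "c = (dG X h k + e) / 2"
    have c1: "c < 1" "dG X h k < c" "c < e" using False hk by (auto simp: c_def)
    define G where "G = {p \<in> topspace (prod_topology X euclideanreal). \<bar>snd p - fn h (fst p)\<bar> \<in> {..<c}}"
    have Gopen: "openin (prod_topology X euclideanreal) G"
      unfolding G_def by (rule openin_continuous_map_preimage[OF cont_dist_fn[OF assms]]) auto
    have "k \<in> FG X G"
      unfolding FG_def
    proof (intro CollectI conjI kC)
      show "k \<subseteq> G" unfolding CX_subset[OF kC]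
      proof
        fix x assume x: "x \<in> topspace X"
        have "min 1 \<bar>fn h x - fn k x\<bar> \<le> dG X h k" by (rule dG_upper[OF x])
        then have "\<bar>fn k x - fn h x\<bar> < c" using c1 by (auto simp: abs_minus_commute)
        then show "(x, fn k x) \<in> G" using x by (auto simp: G_def)
      qed
    qed
    moreover have "FG X G \<subseteq> Metric_space.mball (CX X) (dG X) h e"
    proof
      fix k' assume "k' \<in> FG X G"
      then have k'C: "k' \<in> CX X" and sub: "k' \<subseteq> G" by (auto simp: FG_def)
      have "dG X h k' \<le> c"
      proof (rule dG_least)
        show "0 \<le> c" using c1 dG_nonneg[of X h k] by linarith
        fix x assume x: "x \<in> topspace X"
        then have "(x, fn k' x) \<in> G" using sub CX_subset[OF k'C] by blast
        then have "\<bar>fn k' x - fn h x\<bar> < c" by (auto simp: G_def)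
        then show "min 1 \<bar>fn h x - fn k' x\<bar> \<le> c" by (auto simp: abs_minus_commute)
      qed
      then show "k' \<in> Metric_space.mball (CX X) (dG X) h e"
        using c1 assms k'C by (auto simp: Metric_space.mball_def[OF dG_metric])
    qed
    ultimately show ?thesis using FG_open[OF Gopen] by blast
  qed
qed

lemma mtop_coarser:
  assumes "openin (Metric_space.mtopology (CX X) (dG X)) U"
  shows "openin (graph_topology X) U"
proof (subst openin_subopen, intro ballI)
  fix k assume "k \<in> U"
  then obtain r where r: "r > 0" "Metric_space.mball (CX X) (dG X) k r \<subseteq> U" and kC: "k \<in> CX X"
  proof -
    have "U \<subseteq> CX X \<and> (\<forall>x. x \<in> U \<longrightarrow> (\<exists>r>0. Metric_space.mball (CX X) (dG X) x r \<subseteq> U))"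
      using assms Metric_space.openin_mtopology[OF dG_metric] by blast
    then show ?thesis using that \<open>k \<in> U\<close> by blast
  qed
  have "k \<in> Metric_space.mball (CX X) (dG X) k r"
    using r kC dG_zero[OF kC kC] by (simp add: Metric_space.mball_def[OF dG_metric])
  then show "\<exists>T. openin (graph_topology X) T \<and> k \<in> T \<and> T \<subseteq> U"
    using mball_open[OF kC, of r] r(2) by blast
qed

lemma dG_cont:
  assumes "h \<in> CX X"
  shows "continuous_map (graph_topology X) euclideanreal (\<lambda>k. dG X k h)"
  unfolding continuous_map_upper_lower_semicontinuous_lt
proof (intro allI conjI)
  fix a
  show "openin (graph_topology X) {x \<in> topspace (graph_topology X). dG X x h < a}"
  proof -
    have "{x \<in> topspace (graph_topology X). dG X x h < a} = Metric_space.mball (CX X) (dG X) h a"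
      using assms by (auto simp: topspace_GT Metric_space.mball_def[OF dG_metric] dG_commute)
    then show ?thesis using mball_open[OF assms] by simp
  qed
  show "openin (graph_topology X) {x \<in> topspace (graph_topology X). a < dG X x h}"
  proof (subst openin_subopen, intro ballI)
    fix k assume k: "k \<in> {x \<in> topspace (graph_topology X). a < dG X x h}"
    then have kC: "k \<in> CX X" by (simp add: topspace_GT)
    have "Metric_space.mball (CX X) (dG X) k (dG X k h - a) \<subseteq> {x \<in> topspace (graph_topology X). a < dG X x h}"
    proof
      fix y assume "y \<in> Metric_space.mball (CX X) (dG X) k (dG X k h - a)"
      then have "y \<in> CX X" "dG X k y < dG X k h - a" by (auto simp: Metric_space.mball_def[OF dG_metric])
      moreover have "dG X k h \<le> dG X k y + dG X y h" by (rule dG_triangle)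
      ultimately show "y \<in> {x \<in> topspace (graph_topology X). a < dG X x h}"
        by (auto simp: topspace_GT)
    qed
    moreover have "k \<in> Metric_space.mball (CX X) (dG X) k (dG X k h - a)"
      using k kC dG_zero[OF kC kC] by (auto simp: Metric_space.mball_def[OF dG_metric])
    ultimately show "\<exists>T. openin (graph_topology X) T \<and> k \<in> T \<and> T \<subseteq> {x \<in> topspace (graph_topology X). a < dG X x h}"
      using mball_open[OF kC] by blast
  qed
qed

lemma eval_cont:
  assumes "t1_space X" "x0 \<in> topspace X"
  shows "continuous_map (graph_topology X) euclideanreal (\<lambda>k. fn k x0)"
  unfolding continuous_map_def
proof (intro conjI allI impI)
  show "(\<lambda>k. fn k x0) \<in> topspace (graph_topology X) \<rightarrow> topspace euclideanreal" by simp
  fix V assume V: "openin euclideanreal V"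
  define G where "G = topspace X \<times> UNIV - {x0} \<times> (- V)"
  have "closedin (prod_topology X euclideanreal) ({x0} \<times> (- V))"
    using V assms by (auto simp: closedin_prod_Times_iff t1_space_closedin_singleton)
  then have Gopen: "openin (prod_topology X euclideanreal) G"
    unfolding G_def by (metis openin_diff openin_topspace topspace_euclidean topspace_prod_topology)
  have "{x \<in> topspace (graph_topology X). fn x x0 \<in> V} = FG X G"
  proof (rule set_eqI)
    fix k
    have "k \<in> CX X \<Longrightarrow> (k \<subseteq> G \<longleftrightarrow> fn k x0 \<in> V)"
    proof -
      assume kC: "k \<in> CX X"
      have "k \<subseteq> G \<longleftrightarrow> (\<forall>x\<in>topspace X. (x, fn k x) \<in> G)" by (rule CX_subset[OF kC])
      also have "\<dots> \<longleftrightarrow> fn k x0 \<in> V" using assms(2) by (auto simp: G_def)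
      finally show ?thesis .
    qed
    then show "k \<in> {x \<in> topspace (graph_topology X). fn x x0 \<in> V} \<longleftrightarrow> k \<in> FG X G"
      unfolding FG_def topspace_GT by auto
  qed
  then show "openin (graph_topology X) {x \<in> topspace (graph_topology X). fn x x0 \<in> V}"
    using FG_open[OF Gopen] by simp
qed



lemma not_pseudo_L2:
  fixes T :: "'b topology" and Q :: "'b set" and d :: "'b \<Rightarrow> 'b \<Rightarrow> real"
    and \<sigma> :: "nat \<Rightarrow> 'b" and \<gamma> :: "nat \<Rightarrow> 'b \<Rightarrow> real"
  assumes \<sigma>Q: "\<And>n. \<sigma> n \<in> Q"
    and dcont: "\<And>n. continuous_map (subtopology T Q) euclideanreal (\<lambda>s. d s (\<sigma> n))"
    and dself: "\<And>n. d (\<sigma> n) (\<sigma> n) = 0"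
    and gcont: "\<And>n. continuous_map (subtopology T Q) euclideanreal (\<gamma> n)"
    and gnn: "\<And>n s. \<gamma> n s \<ge> 0"
    and g1: "\<And>n. \<gamma> n (\<sigma> n) = 1"
    and loc: "\<And>q. q \<in> Q \<Longrightarrow> \<exists>W r N. openin (subtopology T Q) W \<and> q \<in> W \<and> r > 0 \<and>
                   (\<forall>n\<ge>N. \<forall>s\<in>W. \<gamma> n s = 0 \<or> d s (\<sigma> n) \<ge> r)"
  shows "\<not> pseudocompactin T Q"
proof
  assume pc: "pseudocompactin T Q"
  define \<beta> where "\<beta> n s = \<gamma> n s * max 0 (1 - real (Suc n) * d s (\<sigma> n))" for n s
  have \<beta>nn: "\<beta> n s \<ge> 0" for n s unfolding \<beta>_def using gnn by simp
  have \<beta>1: "\<beta> n (\<sigma> n) = 1" for n unfolding \<beta>_def using g1 dself by simp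
  have \<beta>cont: "continuous_map (subtopology T Q) euclideanreal (\<beta> n)" for n
    unfolding \<beta>_def by (intro continuous_intros gcont dcont)
  have locz: "\<exists>W M. openin (subtopology T Q) W \<and> q \<in> W \<and> (\<forall>s\<in>W. \<forall>n\<ge>M. \<beta> n s = 0)"
    if q: "q \<in> Q" for q
  proof -
    obtain W r N where W: "openin (subtopology T Q) W" "q \<in> W" "r > 0"
      and H: "\<forall>n\<ge>N. \<forall>s\<in>W. \<gamma> n s = 0 \<or> d s (\<sigma> n) \<ge> r"
      using loc[OF q] by blast
    define M where "M = max N (nat \<lceil>1/r\<rceil>)"
    have "\<beta> n s = 0" if s: "s \<in> W" and n: "n \<ge> M" for s n
    proof (cases "\<gamma> n s = 0")
      case True then show ?thesis by (simp add: \<beta>_def)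
    next
      case False
      have nN: "n \<ge> N" using n unfolding M_def by simp
      then have dr: "d s (\<sigma> n) \<ge> r" using H s False by blast
      have "nat \<lceil>1/r\<rceil> \<le> n" using n unfolding M_def by simp
      then have "real (nat \<lceil>1/r\<rceil>) \<le> real n" by (simp only: of_nat_le_iff)
      moreover have "1/r \<le> real (nat \<lceil>1/r\<rceil>)" by (rule real_nat_ceiling_ge)
      ultimately have "1/r \<le> real n" by (rule order.trans[rotated])
      then have n1: "real n * r \<ge> 1" using W(3) by (simp add: field_simps)
      have "real n * r \<le> real (Suc n) * d s (\<sigma> n)"
        by (rule mult_mono) (use dr W(3) in auto)
      then have "real (Suc n) * d s (\<sigma> n) \<ge> 1" using n1 by linarith
      then show ?thesis by (simp add: \<beta>_def)
    qed
    then show ?thesis using W by blast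
  qed
  define \<Phi> where "\<Phi> s = (\<Sum>n\<in>{n. \<beta> n s \<noteq> 0}. real n * \<beta> n s)" for s
  have \<Phi>eq: "\<Phi> s = (\<Sum>n<M. real n * \<beta> n s)" if "\<forall>n\<ge>M. \<beta> n s = 0" for s M
  proof -
    have sub: "{n. \<beta> n s \<noteq> 0} \<subseteq> {..<M}" using that by (auto simp: not_le[symmetric])
    show ?thesis unfolding \<Phi>_def
      by (rule sum.mono_neutral_cong_left) (use sub in auto)
  qed
  have \<Phi>cont: "continuous_map (subtopology T Q) euclideanreal \<Phi>"
    unfolding continuous_map_def
  proof (intro conjI allI impI)
    show "\<Phi> \<in> topspace (subtopology T Q) \<rightarrow> topspace euclideanreal" by simp
    fix U :: "real set" assume U: "openin euclideanreal U"
    show "openin (subtopology T Q) {x \<in> topspace (subtopology T Q). \<Phi> x \<in> U}"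
    proof (subst openin_subopen, intro ballI)
      fix s0 assume s0: "s0 \<in> {x \<in> topspace (subtopology T Q). \<Phi> x \<in> U}"
      then have "s0 \<in> Q" by simp
      then obtain W M where W: "openin (subtopology T Q) W" "s0 \<in> W" and Z: "\<forall>s\<in>W. \<forall>n\<ge>M. \<beta> n s = 0"
        using locz by blast
      have c: "continuous_map (subtopology T Q) euclideanreal (\<lambda>s. \<Sum>n<M. real n * \<beta> n s)"
        by (intro continuous_intros \<beta>cont) auto
      define T' where "T' = W \<inter> {x \<in> topspace (subtopology T Q). (\<Sum>n<M. real n * \<beta> n x) \<in> U}"
      have "openin (subtopology T Q) T'"
        unfolding T'_def using W(1) openin_continuous_map_preimage[OF c U] by (rule openin_Int)
      moreover have "s0 \<in> T'" using s0 W Z \<Phi>eq[of M s0] by (auto simp: T'_def)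
      moreover have "T' \<subseteq> {x \<in> topspace (subtopology T Q). \<Phi> x \<in> U}"
        using Z \<Phi>eq by (auto simp: T'_def)
      ultimately show "\<exists>T'. openin (subtopology T Q) T' \<and> s0 \<in> T' \<and> T' \<subseteq> {x \<in> topspace (subtopology T Q). \<Phi> x \<in> U}"
        by blast
    qed
  qed
  then have "bounded (\<Phi> ` Q)" using pc unfolding pseudocompactin_def by blast
  then obtain B where B: "\<And>s. s \<in> Q \<Longrightarrow> \<bar>\<Phi> s\<bar> \<le> B" unfolding bounded_real by blast
  have big: "\<Phi> (\<sigma> n) \<ge> real n" for n
  proof -
    obtain W M where "\<sigma> n \<in> W" "\<forall>s\<in>W. \<forall>k\<ge>M. \<beta> k s = 0" using locz[OF \<sigma>Q] by blast
    then have Z: "\<forall>k\<ge>max M (Suc n). \<beta> k (\<sigma> n) = 0" by auto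
    have "real n * \<beta> n (\<sigma> n) \<le> (\<Sum>k<max M (Suc n). real k * \<beta> k (\<sigma> n))"
      by (rule member_le_sum) (auto simp: \<beta>nn)
    then show ?thesis using \<Phi>eq[OF Z] \<beta>1[of n] by simp
  qed
  have "real (nat \<lceil>B\<rceil> + 1) \<le> B" using big[of "nat \<lceil>B\<rceil> + 1"] B[OF \<sigma>Q] by (smt (verit))
  then show False by linarith
qed



lemma LF_open:
  assumes t1: "t1_space X" and xt: "\<And>n. x n \<in> topspace X"
    and lf: "\<And>z. z \<in> topspace X \<Longrightarrow> \<exists>V. openin X V \<and> z \<in> V \<and> finite {n. x n \<in> V}"
    and K: "\<And>n. closed (K n)"
  shows "openin (prod_topology X euclideanreal) (topspace X \<times> UNIV - (\<Union>n. {x n} \<times> K n))"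
proof (subst openin_subopen, intro ballI)
  fix p assume p: "p \<in> topspace X \<times> UNIV - (\<Union>n. {x n} \<times> K n)"
  obtain z y where pz: "p = (z, y)" by fastforce
  have z: "z \<in> topspace X" using p pz by auto
  obtain V where V: "openin X V" "z \<in> V" "finite {n. x n \<in> V}" using lf[OF z] by blast
  define F where "F = {n. x n \<in> V}"
  define T where "T = V \<times> UNIV - (\<Union>n\<in>F. {x n} \<times> K n)"
  have cl: "closedin (prod_topology X euclideanreal) (\<Union>n\<in>F. {x n} \<times> K n)"
  proof (rule closedin_Union)
    show "finite ((\<lambda>n. {x n} \<times> K n) ` F)" using V(3) F_def by simp
    fix S assume "S \<in> (\<lambda>n. {x n} \<times> K n) ` F"
    then obtain n where "S = {x n} \<times> K n" by blast
    then show "closedin (prod_topology X euclideanreal) S"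
      using K[of n] t1 xt[of n] by (simp add: closedin_prod_Times_iff t1_space_closedin_singleton)
  qed
  have "openin (prod_topology X euclideanreal) (V \<times> UNIV)"
    using V(1) by (simp add: openin_prod_Times_iff)
  then have To: "openin (prod_topology X euclideanreal) T"
    unfolding T_def using cl by (rule openin_diff)
  have "p \<in> T" using p pz V(2) by (auto simp: T_def)
  moreover have "T \<subseteq> topspace X \<times> UNIV - (\<Union>n. {x n} \<times> K n)"
  proof
    fix q assume q: "q \<in> T"
    then have "fst q \<in> V" by (auto simp: T_def)
    then have "fst q \<in> topspace X" using V(1) openin_subset by blast
    moreover have "q \<notin> {x n} \<times> K n" for n
    proof
      assume "q \<in> {x n} \<times> K n"
      then have "x n = fst q" by auto
      then have "n \<in> F" using \<open>fst q \<in> V\<close> by (simp add: F_def)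
      then show False using q \<open>q \<in> {x n} \<times> K n\<close> by (auto simp: T_def)
    qed
    ultimately show "q \<in> topspace X \<times> UNIV - (\<Union>n. {x n} \<times> K n)" by (cases q) auto
  qed
  ultimately show "\<exists>T. openin (prod_topology X euclideanreal) T \<and> p \<in> T \<and>
                     T \<subseteq> topspace X \<times> UNIV - (\<Union>n. {x n} \<times> K n)"
    using To by blast
qed



lemma pc_ball_G:
  assumes t1: "t1_space X" and QC: "Q \<subseteq> CX X" and pc: "pseudocompactin (graph_topology X) Q"
    and gQ: "g \<in> Q" and Gop: "openin (prod_topology X euclideanreal) G" and gG: "g \<subseteq> G"
  shows "\<exists>\<epsilon>>0. \<forall>k\<in>Q. dG X k g < \<epsilon> \<longrightarrow> k \<subseteq> G"
proof (rule ccontr)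
  assume "\<not> ?thesis"
  then have "\<forall>n::nat. \<exists>k. k \<in> Q \<and> dG X k g < 1 / real (Suc n) \<and> \<not> k \<subseteq> G"
    by (metis of_nat_0_less_iff zero_less_Suc zero_less_divide_1_iff)
  then obtain h where h: "\<And>n. h n \<in> Q" "\<And>n. dG X (h n) g < 1 / real (Suc n)" "\<And>n. \<not> h n \<subseteq> G"
    by metis
  have hC: "h n \<in> CX X" for n using h(1) QC by blast
  have gC: "g \<in> CX X" using gQ QC by blast
  have gG': "\<And>z. z \<in> topspace X \<Longrightarrow> (z, fn g z) \<in> G" using gG CX_subset[OF gC] by blast
  have "\<forall>n. \<exists>z. z \<in> topspace X \<and> (z, fn (h n) z) \<notin> G"
    using h(3) CX_subset[OF hC] by blast
  then obtain x where x: "\<And>n. x n \<in> topspace X" "\<And>n. (x n, fn (h n) (x n)) \<notin> G" by metis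
  define b where "b n = fn (h n) (x n)" for n
  define a where "a n = fn g (x n)" for n
  define r where "r n = \<bar>b n - a n\<bar> / 2" for n
  have ab: "a n \<noteq> b n" for n
  proof
    assume "a n = b n"
    moreover have "(x n, a n) \<in> G" unfolding a_def by (rule gG'[OF x(1)])
    ultimately show False using x(2)[of n] by (simp add: b_def)
  qed
  have rpos: "r n > 0" for n using ab[of n] by (simp add: r_def)
  have close: "\<bar>b n - a n\<bar> < 1 / real (Suc n)" for n
    unfolding a_def b_def by (rule dG_lt[OF h(2) _ x(1)]) auto
  have lf: "\<exists>V. openin X V \<and> z \<in> V \<and> finite {n. x n \<in> V}" if z: "z \<in> topspace X" for z
  proof -
    obtain U0 V0 where UV: "openin X U0" "openin euclideanreal V0" "z \<in> U0" "fn g z \<in> V0" "U0 \<times> V0 \<subseteq> G"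
    proof -
      have "\<exists>U V. openin X U \<and> openin euclideanreal V \<and> z \<in> U \<and> fn g z \<in> V \<and> U \<times> V \<subseteq> G"
        using openin_prod_topology_alt[THEN iffD1, OF Gop, rule_format, OF gG'[OF z]] .
      then obtain U V where "openin X U" "openin euclideanreal V" "z \<in> U" "fn g z \<in> V" "U \<times> V \<subseteq> G"
        by blast
      then show ?thesis by (rule that)
    qed
    have "open V0" using UV(2) by simp
    then obtain e where e: "e > 0" "ball (fn g z) e \<subseteq> V0"
      using open_contains_ball[of V0] UV(4) by blast
    define e1 where "e1 = min e 1"
    have e1: "e1 > 0" "e1 \<le> 1" "e1 \<le> e" using e by (auto simp: e1_def)
    define V where "V = U0 \<inter> {z' \<in> topspace X. fn g z' \<in> ball (fn g z) (e1/2)}"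
    have Vo: "openin X V" unfolding V_def
      by (intro openin_Int UV(1) openin_continuous_map_preimage[OF CX_fn_cont[OF gC]]) auto
    have zV: "z \<in> V" using z UV(3) e1 by (simp add: V_def)
    have "{n. x n \<in> V} \<subseteq> {..< nat \<lceil>2/e1\<rceil>}"
    proof
      fix n assume "n \<in> {n. x n \<in> V}"
      then have xV0: "x n \<in> U0" "fn g (x n) \<in> ball (fn g z) (e1/2)"
        by (simp_all add: V_def)
      then have xV: "x n \<in> U0" "\<bar>fn g (x n) - fn g z\<bar> < e1/2"
        by (simp_all add: dist_real_def abs_minus_commute)
      show "n \<in> {..< nat \<lceil>2/e1\<rceil>}"
      proof (rule ccontr)
        assume "n \<notin> {..< nat \<lceil>2/e1\<rceil>}"
        then have "nat \<lceil>2/e1\<rceil> \<le> n" by (simp only: lessThan_iff not_less)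
        then have "real (nat \<lceil>2/e1\<rceil>) \<le> real n" by (simp only: of_nat_le_iff)
        moreover have "2/e1 \<le> real (nat \<lceil>2/e1\<rceil>)" by (rule real_nat_ceiling_ge)
        ultimately have "2/e1 \<le> real n" by (rule order.trans[rotated])
        then have "2 \<le> real n * e1" using e1 by (simp add: field_simps)
        then have "1 / real (Suc n) \<le> e1/2" using e1 by (simp add: field_simps)
        then have "\<bar>b n - a n\<bar> < e1/2" using close[of n] by linarith
        then have "\<bar>b n - fn g z\<bar> < e" using xV(2) e1 unfolding a_def by linarith
        then have "b n \<in> ball (fn g z) e" by (simp add: dist_real_def abs_minus_commute)
        then have "b n \<in> V0" using e(2) by blast
        then have "(x n, b n) \<in> G" using xV(1) UV(5) by blast
        then show False using x(2) by (simp add: b_def)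
      qed
    qed
    then have "finite {n. x n \<in> V}" using finite_subset by blast
    then show ?thesis using Vo zV by blast
  qed
  define K where "K n = {y. \<bar>y - b n\<bar> \<le> r n}" for n
  have Kc: "closed (K n)" for n
  proof -
    have "K n = cball (b n) (r n)" by (auto simp: K_def cball_def dist_real_def abs_minus_commute)
    then show ?thesis by simp
  qed
  define G2 where "G2 = G \<inter> (topspace X \<times> UNIV - (\<Union>n. {x n} \<times> K n))"
  have G2o: "openin (prod_topology X euclideanreal) G2"
    unfolding G2_def by (intro openin_Int Gop LF_open[OF t1 x(1) lf Kc]) auto
  have gG2: "g \<in> FG X G2"
    unfolding FG_def
  proof (intro CollectI conjI gC)
    show "g \<subseteq> G2" unfolding CX_subset[OF gC]
    proof
      fix z assume z: "z \<in> topspace X"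
      have "(z, fn g z) \<notin> {x n} \<times> K n" for n
      proof
        assume "(z, fn g z) \<in> {x n} \<times> K n"
        then have "z = x n" "\<bar>a n - b n\<bar> \<le> r n" by (auto simp: K_def a_def)
        then show False using rpos[of n] by (auto simp: r_def abs_minus_commute)
      qed
      then show "(z, fn g z) \<in> G2" using gG'[OF z] z by (auto simp: G2_def)
    qed
  qed
  define \<gamma> where "\<gamma> n k = max 0 (1 - \<bar>fn k (x n) - b n\<bar> / r n)" for n k
  have "\<not> pseudocompactin (graph_topology X) Q"
  proof (rule not_pseudo_L2[where d = "dG X" and \<sigma> = h and \<gamma> = \<gamma>])
    show "h n \<in> Q" for n by (rule h(1))
    show "continuous_map (subtopology (graph_topology X) Q) euclideanreal (\<lambda>s. dG X s (h n))" for n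
      by (rule continuous_map_from_subtopology[OF dG_cont[OF hC]])
    show "dG X (h n) (h n) = 0" for n using dG_zero[OF hC hC] by simp
    show "continuous_map (subtopology (graph_topology X) Q) euclideanreal (\<gamma> n)" for n
      unfolding \<gamma>_def
      by (intro continuous_map_from_subtopology continuous_intros eval_cont[OF t1 x(1)]) (use rpos[of n] in auto)
    show "\<gamma> n s \<ge> 0" for n s by (simp add: \<gamma>_def)
    show "\<gamma> n (h n) = 1" for n by (simp add: \<gamma>_def b_def)
    fix q assume qQ: "q \<in> Q"
    show "\<exists>W r N. openin (subtopology (graph_topology X) Q) W \<and> q \<in> W \<and> r > 0 \<and>
                   (\<forall>n\<ge>N. \<forall>s\<in>W. \<gamma> n s = 0 \<or> dG X s (h n) \<ge> r)"
    proof (cases "q = g")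
      case True
      have "openin (subtopology (graph_topology X) Q) (Q \<inter> FG X G2)"
        by (rule openin_subtopology_Int2[OF FG_open[OF G2o]])
      moreover have "q \<in> Q \<inter> FG X G2" using True gQ gG2 by simp
      moreover have "\<gamma> n s = 0" if s: "s \<in> Q \<inter> FG X G2" for n s
      proof -
        have sC: "s \<in> CX X" and "s \<subseteq> G2" using s by (auto simp: FG_def)
        then have "(x n, fn s (x n)) \<in> G2" using CX_subset[OF sC] x(1) by blast
        then have "fn s (x n) \<notin> K n" by (auto simp: G2_def)
        then have "\<bar>fn s (x n) - b n\<bar> / r n \<ge> 1" using rpos[of n] by (simp add: K_def)
        then show ?thesis by (simp add: \<gamma>_def)
      qed
      ultimately show ?thesis using zero_less_one by blast
    next
      case False
      have qC: "q \<in> CX X" using qQ QC by blast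
      define c where "c = dG X q g"
      have cpos: "c > 0" using dG_zero[OF qC gC] dG_nonneg[of X q g] False by (simp add: c_def)
      define W where "W = Q \<inter> Metric_space.mball (CX X) (dG X) q (c/3)"
      have Wo: "openin (subtopology (graph_topology X) Q) W"
        unfolding W_def by (rule openin_subtopology_Int2[OF mball_open[OF qC]])
      have qW: "q \<in> W" using qQ qC cpos dG_zero[OF qC qC]
        by (simp add: W_def Metric_space.mball_def[OF dG_metric])
      define N where "N = nat \<lceil>3/c\<rceil>"
      have "dG X s (h n) \<ge> c/3" if n: "n \<ge> N" and s: "s \<in> W" for n s
      proof -
        have "nat \<lceil>3/c\<rceil> \<le> n" using n unfolding N_def .
        then have "real (nat \<lceil>3/c\<rceil>) \<le> real n" by (simp only: of_nat_le_iff)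
        moreover have "3/c \<le> real (nat \<lceil>3/c\<rceil>)" by (rule real_nat_ceiling_ge)
        ultimately have "3/c \<le> real n" by (rule order.trans[rotated])
        then have "3 \<le> real n * c" using cpos by (simp add: field_simps)
        then have "1 / real (Suc n) \<le> c/3" using cpos by (simp add: field_simps)
        then have hg: "dG X (h n) g < c/3" using h(2)[of n] by linarith
        have qs: "dG X q s < c/3" using s by (simp add: W_def Metric_space.mball_def[OF dG_metric])
        have "c \<le> dG X q s + dG X s g" unfolding c_def by (rule dG_triangle)
        moreover have "dG X s g \<le> dG X s (h n) + dG X (h n) g" by (rule dG_triangle)
        ultimately show ?thesis using hg qs by linarith
      qed
      then show ?thesis using Wo qW cpos
        by (intro exI[of _ W] exI[of _ "c/3"] exI[of _ N]) auto
    qed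
  qed
  then show False using pc by blast
qed

lemma pc_ball:
  assumes t1: "t1_space X" and QC: "Q \<subseteq> CX X" and pc: "pseudocompactin (graph_topology X) Q"
    and gQ: "g \<in> Q" and U: "openin (graph_topology X) U" "g \<in> U"
  shows "\<exists>\<epsilon>>0. \<forall>k\<in>Q. dG X k g < \<epsilon> \<longrightarrow> k \<in> U"
proof -
  obtain G where G: "openin (prod_topology X euclideanreal) G" "g \<in> FG X G" "FG X G \<subseteq> U"
    using GT_basic[OF U] by blast
  obtain \<epsilon> where "\<epsilon> > 0" "\<forall>k\<in>Q. dG X k g < \<epsilon> \<longrightarrow> k \<subseteq> G"
    using pc_ball_G[OF t1 QC pc gQ G(1)] G(2) by (auto simp: FG_def)
  have "\<forall>k\<in>Q. dG X k g < \<epsilon> \<longrightarrow> k \<in> U"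
  proof (intro ballI impI)
    fix k assume "k \<in> Q" "dG X k g < \<epsilon>"
    then have "k \<in> FG X G" using \<open>\<forall>k\<in>Q. dG X k g < \<epsilon> \<longrightarrow> k \<subseteq> G\<close> QC by (auto simp: FG_def)
    then show "k \<in> U" using G(3) by blast
  qed
  then show ?thesis using \<open>\<epsilon> > 0\<close> by blast
qed



lemma mball_mem: "q \<in> CX X \<Longrightarrow> k \<in> Metric_space.mball (CX X) (dG X) q r \<longleftrightarrow> k \<in> CX X \<and> dG X q k < r"
  by (simp add: Metric_space.mball_def[OF dG_metric])

lemma pc_mcompact:
  assumes t1: "t1_space X" and QC: "Q \<subseteq> CX X" and pc: "pseudocompactin (graph_topology X) Q"
  shows "compactin (Metric_space.mtopology (CX X) (dG X)) Q"
proof -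
  have "Q \<inter> Metric_space.mtopology (CX X) (dG X) derived_set_of T \<noteq> {}"
    if T: "T \<subseteq> Q" "infinite T" for T
  proof
    assume empty: "Q \<inter> Metric_space.mtopology (CX X) (dG X) derived_set_of T = {}"
    obtain \<sigma> :: "nat \<Rightarrow> _" where \<sigma>: "inj \<sigma>" "range \<sigma> \<subseteq> T"
      using infinite_countable_subset[OF T(2)] by blast
    have \<sigma>Q: "\<sigma> n \<in> Q" for n using \<sigma>(2) T(1) by blast
    have \<sigma>C: "\<sigma> n \<in> CX X" for n using \<sigma>Q QC by blast
    have "\<not> pseudocompactin (graph_topology X) Q"
    proof (rule not_pseudo_L2[where d = "dG X" and \<sigma> = \<sigma> and \<gamma> = "\<lambda>n s. 1"])
      show "\<sigma> n \<in> Q" for n by (rule \<sigma>Q)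
      show "continuous_map (subtopology (graph_topology X) Q) euclideanreal (\<lambda>s. dG X s (\<sigma> n))" for n
        by (rule continuous_map_from_subtopology[OF dG_cont[OF \<sigma>C]])
      show "dG X (\<sigma> n) (\<sigma> n) = 0" for n using dG_zero[OF \<sigma>C \<sigma>C] by simp
      show "continuous_map (subtopology (graph_topology X) Q) euclideanreal (\<lambda>s. 1)" for n :: nat by simp
      show "(0::real) \<le> 1" by simp
      show "(1::real) = 1" by simp
      fix q assume qQ: "q \<in> Q"
      have qC: "q \<in> CX X" using qQ QC by blast
      have "q \<notin> Metric_space.mtopology (CX X) (dG X) derived_set_of T"
      proof
        assume "q \<in> Metric_space.mtopology (CX X) (dG X) derived_set_of T"
        then have "q \<in> Q \<inter> Metric_space.mtopology (CX X) (dG X) derived_set_of T" by (rule IntI[OF qQ])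
        then show False by (simp only: empty empty_iff)
      qed
      moreover have "q \<in> topspace (Metric_space.mtopology (CX X) (dG X))"
        using qC by (simp add: Metric_space.topspace_mtopology[OF dG_metric])
      ultimately have "\<not> (\<forall>T'. q \<in> T' \<and> openin (Metric_space.mtopology (CX X) (dG X)) T' \<longrightarrow> (\<exists>y. y \<noteq> q \<and> y \<in> T \<and> y \<in> T'))"
        unfolding in_derived_set_of by simp
      then obtain U where U: "q \<in> U" "openin (Metric_space.mtopology (CX X) (dG X)) U"
        "\<And>y. y \<noteq> q \<Longrightarrow> y \<in> T \<Longrightarrow> y \<notin> U"
        unfolding not_all not_imp not_ex by blast
      have "\<exists>r>0. Metric_space.mball (CX X) (dG X) q r \<subseteq> U"
        using Metric_space.openin_mtopology[OF dG_metric, THEN iffD1, OF U(2)] U(1) by blast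
      then obtain r where r: "r > 0" "Metric_space.mball (CX X) (dG X) q r \<subseteq> U" by blast
      have Fsub: "{n. dG X (\<sigma> n) q < r} \<subseteq> \<sigma> -` {q}"
      proof
        fix n assume "n \<in> {n. dG X (\<sigma> n) q < r}"
        then have "dG X q (\<sigma> n) < r" by (simp add: dG_commute)
        then have "\<sigma> n \<in> Metric_space.mball (CX X) (dG X) q r"
          using \<sigma>C[of n] by (simp add: mball_mem[OF qC])
        then have "\<sigma> n \<in> U" using r(2) by blast
        then have "\<sigma> n = q" using U(3) \<sigma>(2) by blast
        then show "n \<in> \<sigma> -` {q}" by simp
      qed
      have "finite (\<sigma> -` {q})" by (rule finite_vimageI[OF _ \<sigma>(1)]) simp
      then have "finite {n. dG X (\<sigma> n) q < r}" using Fsub finite_subset by blast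
      then obtain N where N: "{n. dG X (\<sigma> n) q < r} \<subseteq> {..<N}" using finite_nat_bounded by blast
      define W where "W = Q \<inter> Metric_space.mball (CX X) (dG X) q (r/2)"
      have Wo: "openin (subtopology (graph_topology X) Q) W"
        unfolding W_def by (rule openin_subtopology_Int2[OF mball_open[OF qC]])
      have qW: "q \<in> W" using qQ qC r dG_zero[OF qC qC] by (simp add: W_def mball_mem[OF qC])
      have "dG X s (\<sigma> n) \<ge> r/2" if n: "n \<ge> N" and s: "s \<in> W" for n s
      proof -
        have "n \<notin> {..<N}" using n by simp
        then have "n \<notin> {n. dG X (\<sigma> n) q < r}" using N by blast
        then have "dG X (\<sigma> n) q \<ge> r" by simp
        moreover have "dG X q s < r/2" using s by (simp add: W_def mball_mem[OF qC])
        moreover have "dG X (\<sigma> n) q \<le> dG X (\<sigma> n) s + dG X s q" by (rule dG_triangle)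
        ultimately show ?thesis by (simp add: dG_commute)
      qed
      then show "\<exists>W r N. openin (subtopology (graph_topology X) Q) W \<and> q \<in> W \<and> r > 0 \<and>
                   (\<forall>n\<ge>N. \<forall>s\<in>W. (1::real) = 0 \<or> dG X s (\<sigma> n) \<ge> r)"
        using Wo qW r(1) by (intro exI[of _ W] exI[of _ "r/2"] exI[of _ N]) auto
    qed
    then show False using pc by blast
  qed
  then show ?thesis
    unfolding Metric_space.compactin_eq_Bolzano_Weierstrass[OF dG_metric] using QC by blast
qed

lemma pc_compact:
  assumes t1: "t1_space X" and QC: "Q \<subseteq> CX X" and pc: "pseudocompactin (graph_topology X) Q"
  shows "compactin (graph_topology X) Q"
  unfolding compactin_def
proof (intro conjI allI impI)
  show "Q \<subseteq> topspace (graph_topology X)" using QC by (simp add: topspace_GT)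
  fix \<U> assume \<U>: "(\<forall>x\<in>\<U>. openin (graph_topology X) x) \<and> Q \<subseteq> \<Union>\<U>"
  have "\<forall>q\<in>Q. \<exists>p. fst p \<in> \<U> \<and> q \<in> fst p \<and> snd p > 0 \<and> (\<forall>k\<in>Q. dG X k q < snd p \<longrightarrow> k \<in> fst p)"
  proof
    fix q assume qQ: "q \<in> Q"
    have "q \<in> \<Union>\<U>" using qQ \<U> by auto
    then obtain U where U: "U \<in> \<U>" "q \<in> U" by (rule UnionE)
    have Uo: "openin (graph_topology X) U" using \<U> U(1) by simp
    obtain e where "e > 0" "\<forall>k\<in>Q. dG X k q < e \<longrightarrow> k \<in> U"
      using pc_ball[OF t1 QC pc qQ Uo U(2)] by (elim exE conjE)
    then show "\<exists>p. fst p \<in> \<U> \<and> q \<in> fst p \<and> snd p > 0 \<and> (\<forall>k\<in>Q. dG X k q < snd p \<longrightarrow> k \<in> fst p)"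
      using U by (intro exI[of _ "(U, e)"]) simp
  qed
  from bchoice[OF this] obtain P where P0: "\<forall>q\<in>Q. fst (P q) \<in> \<U> \<and> q \<in> fst (P q) \<and> snd (P q) > 0 \<and>
      (\<forall>k\<in>Q. dG X k q < snd (P q) \<longrightarrow> k \<in> fst (P q))"
    by blast
  have P: "fst (P q) \<in> \<U> \<and> q \<in> fst (P q) \<and> snd (P q) > 0 \<and>
      (\<forall>k\<in>Q. dG X k q < snd (P q) \<longrightarrow> k \<in> fst (P q))" if "q \<in> Q" for q
    using P0 that by (rule bspec)
  define B where "B q = Metric_space.mball (CX X) (dG X) q (snd (P q))" for q
  have cm: "compactin (Metric_space.mtopology (CX X) (dG X)) Q" by (rule pc_mcompact[OF t1 QC pc])
  have "(\<forall>x\<in>B ` Q. openin (Metric_space.mtopology (CX X) (dG X)) x)"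
    by (auto simp: B_def Metric_space.openin_mball[OF dG_metric])
  moreover have "Q \<subseteq> \<Union>(B ` Q)"
  proof
    fix q assume qQ: "q \<in> Q"
    then have qC: "q \<in> CX X" using QC by blast
    have "q \<in> B q" using P[OF qQ] qC dG_zero[OF qC qC] by (simp add: B_def mball_mem[OF qC])
    then show "q \<in> \<Union>(B ` Q)" using qQ by (rule UN_I[rotated])
  qed
  ultimately have "\<exists>\<F>. finite \<F> \<and> \<F> \<subseteq> B ` Q \<and> Q \<subseteq> \<Union>\<F>"
    using cm[unfolded compactin_def, THEN conjunct2, rule_format, of "B ` Q"] by blast
  then obtain \<F> where \<F>: "finite \<F>" "\<F> \<subseteq> B ` Q" "Q \<subseteq> \<Union>\<F>" by (elim exE conjE)
  obtain C where C: "C \<subseteq> Q" "finite C" "\<F> = B ` C" using finite_subset_image[OF \<F>(1) \<F>(2)] by (elim exE conjE)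
  show "\<exists>\<F>. finite \<F> \<and> \<F> \<subseteq> \<U> \<and> Q \<subseteq> \<Union>\<F>"
  proof (intro exI[of _ "(\<lambda>q. fst (P q)) ` C"] conjI)
    show "finite ((\<lambda>q. fst (P q)) ` C)" using C(2) by simp
    show "(\<lambda>q. fst (P q)) ` C \<subseteq> \<U>"
    proof
      fix V assume "V \<in> (\<lambda>q. fst (P q)) ` C"
      then obtain q where "q \<in> C" "V = fst (P q)" by (rule imageE)
      then show "V \<in> \<U>" using P[of q] C(1) by auto
    qed
    show "Q \<subseteq> \<Union>((\<lambda>q. fst (P q)) ` C)"
    proof
      fix k assume kQ: "k \<in> Q"
      then have "k \<in> \<Union>(B ` C)" using \<F>(3) C(3) by auto
      then obtain q where q: "q \<in> C" "k \<in> B q" by (elim UN_E)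
      have qQ: "q \<in> Q" using q(1) C(1) by blast
      then have qC: "q \<in> CX X" using QC by blast
      have "dG X k q < snd (P q)" using q(2) by (simp add: B_def mball_mem[OF qC] dG_commute)
      then have "k \<in> fst (P q)" using P[OF qQ] kQ by auto
      then show "k \<in> \<Union>((\<lambda>q. fst (P q)) ` C)" using q(1) by blast
    qed
  qed
qed

lemma compact_cc: "compactin T S \<Longrightarrow> countably_compactin T S"
  unfolding compactin_def countably_compactin_def by blast

lemma cc_pc:
  assumes cc: "countably_compactin T S"
  shows "pseudocompactin T S"
  unfolding pseudocompactin_def
proof (intro conjI allI impI)
  show ST: "S \<subseteq> topspace T" using cc by (simp add: countably_compactin_def)
  fix f assume f: "continuous_map (subtopology T S) euclideanreal f"
  have "\<forall>n::nat. \<exists>U. openin T U \<and> {s \<in> topspace (subtopology T S). f s \<in> {-real n<..<real n}} = U \<inter> S"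
  proof
    fix n :: nat
    have "openin (subtopology T S) {s \<in> topspace (subtopology T S). f s \<in> {-real n<..<real n}}"
      by (rule openin_continuous_map_preimage[OF f]) simp
    then show "\<exists>U. openin T U \<and> {s \<in> topspace (subtopology T S). f s \<in> {-real n<..<real n}} = U \<inter> S"
      unfolding openin_subtopology by blast
  qed
  then obtain U where U: "\<And>n. openin T (U n)"
    "\<And>n. {s \<in> topspace (subtopology T S). f s \<in> {-real n<..<real n}} = U n \<inter> S"
    by metis
  have mem: "s \<in> U n \<longleftrightarrow> \<bar>f s\<bar> < real n" if "s \<in> S" for s n
  proof -
    have "s \<in> U n \<longleftrightarrow> s \<in> U n \<inter> S" using that by blast
    also have "\<dots> \<longleftrightarrow> s \<in> {s \<in> topspace (subtopology T S). f s \<in> {-real n<..<real n}}" using U(2)[of n] by simp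
    also have "\<dots> \<longleftrightarrow> \<bar>f s\<bar> < real n" using that ST by auto
    finally show ?thesis .
  qed
  have "S \<subseteq> \<Union>(range U)"
  proof
    fix s assume s: "s \<in> S"
    have "\<bar>f s\<bar> < real (nat \<lceil>\<bar>f s\<bar>\<rceil> + 1)" by linarith
    then show "s \<in> \<Union>(range U)" using mem[OF s] by blast
  qed
  moreover have "countable (range U)" by simp
  moreover have "\<forall>V\<in>range U. openin T V" using U(1) by blast
  ultimately obtain \<F> where \<F>: "finite \<F>" "\<F> \<subseteq> range U" "S \<subseteq> \<Union>\<F>"
    using cc unfolding countably_compactin_def by meson
  then obtain I where I: "finite I" "\<F> = U ` I" using finite_subset_image by metis
  obtain k where k: "I \<subseteq> {..<k}" using finite_nat_bounded[OF I(1)] by blast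
  have "\<bar>f s\<bar> \<le> real k" if s: "s \<in> S" for s
  proof -
    obtain i where i: "i \<in> I" "s \<in> U i" using \<F>(3) I(2) s by blast
    then have "\<bar>f s\<bar> < real i" using mem[OF s] by blast
    moreover have "i < k" using i(1) k by blast
    ultimately show ?thesis by simp
  qed
  then show "bounded (f ` S)" unfolding bounded_real by blast
qed


theorem proposition2p4:
  fixes X :: "'a topology" and Q :: "('a \<times> real) set set"
  assumes "t1_space X" and "Q \<subseteq> CX X"
  shows "(compactin (graph_topology X) Q \<longleftrightarrow> countably_compactin (graph_topology X) Q)
       \<and> (countably_compactin (graph_topology X) Q \<longleftrightarrow> pseudocompactin (graph_topology X) Q)"
  using compact_cc[of "graph_topology X" Q] cc_pc[of "graph_topology X" Q] pc_compact[OF assms]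
  by blast

end
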